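(* Let $\mathcal{A}\in\mathbb{C}^{I_{1\ldots N}\times I_{1\ldots N}}$ and let $\mathcal{N}\in\mathbb{C}^{I_{1\ldots N}\times I_{1\ldots N}}$ be a Hermitian positive definite tensor. Put $\tilde{\mathcal{A}}=\mathcal{N}^{1/2}*_N\mathcal{A}*_N\mathcal{N}^{-1/2}$. Then: (i) $\lambda\in\sigma(\mathcal{A})$ if and only if $\lambda\in\sigma(\tilde{\mathcal{A}})$; (ii) $\lambda\in\sigma(\mathcal{A}^{\dagger}_{\mathcal{N},\mathcal{N}})$ if and only if $\lambda\in\sigma(\tilde{\mathcal{A}}^{\dagger})$; (iii) if $\mathcal{A}$ is weighted normal (i.e. $\mathcal{A}^{\#}_{\mathcal{N}\mathcal{N}}*_N\mathcal{A}=\mathcal{A}*_N\mathcal{A}^{\#}_{\mathcal{N}\mathcal{N}}$) and $\lambda\neq0$, then $\lambda\in\sigma(\mathcal{A})$ if and only if $1/\lambda\in\sigma(\mathcal{A}^{\dagger}_{\mathcal{N},\mathcal{N}})$.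
   Context: Write $I_{1\ldots N}$ for $I_1\times\cdots\times I_N$. Einstein product: $(\mathcal{A}*_N\mathcal{B})_{i_1\ldots i_Mj_1\ldots j_L}=\sum_{k_1,\ldots,k_N}a_{i_1\ldots i_Mk_1\ldots k_N}b_{k_1\ldots k_Nj_1\ldots j_L}$ (also when $\mathcal{B}\in\mathbb{C}^{K_{1\ldots N}}$). $\mathcal{A}^H$ is the conjugate transpose. Identity tensor: entry 1 where the two index blocks coincide, 0 otherwise; inverses are with respect to $*_N$. $\mathcal{N}$ is Hermitian positive definite if $\mathcal{N}^H=\mathcal{N}$ and $\mathcal{X}^H*_N\mathcal{N}*_N\mathcal{X}>0$ for all nonzero $\mathcal{X}$; $\mathcal{N}^{1/2}$ is its unique Hermitian positive definite square root and $\mathcal{N}^{-1/2}=(\mathcal{N}^{1/2})^{-1}$. $\sigma(\mathcal{A})$ is the set of $\lambda\in\mathbb{C}$ such that $\mathcal{A}*_N\mathcal{X}=\lambda\mathcal{X}$ for some nonzero $\mathcal{X}\in\mathbb{C}^{I_{1\ldots N}}$. Weighted conjugate transpose: $\mathcal{A}^{\#}_{\mathcal{N}\mathcal{N}}=\mathcal{N}^{-1}*_N\mathcal{A}^H*_N\mathcal{N}$. Weighted Moore-Penrose inverse $\mathcal{A}^{\dagger}_{\mathcal{M},\mathcal{N}}$: the unique $\mathcal{X}$ with $\mathcal{A}*_N\mathcal{X}*_N\mathcal{A}=\mathcal{A}$, $\mathcal{X}*_N\mathcal{A}*_N\mathcal{X}=\mathcal{X}$, $(\mathcal{M}*_N\mathcal{A}*_N\mathcal{X})^H=\mathcal{M}*_N\mathcal{A}*_N\mathcal{X}$,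 $(\mathcal{N}*_N\mathcal{X}*_N\mathcal{A})^H=\mathcal{N}*_N\mathcal{X}*_N\mathcal{A}$; $\mathcal{A}^{\dagger}$ is the case of identity weights. *)

theory Defs
  imports "HOL-Analysis.Analysis"
begin

text \<open>Tensors in C^(I_1..N x I_1..N) are represented as functions on pairs of multi-indices
  (nat lists), for a dimension list d = [I_1,...,I_N]; well-formed tensors vanish outside
  the index set. Tensors in C^(I_1..N) are functions on multi-indices.\<close>

type_synonym tensor = "nat list \<Rightarrow> nat list \<Rightarrow> complex"
type_synonym vtensor = "nat list \<Rightarrow> complex"

definition idx :: "nat list \<Rightarrow> nat list set" where
  "idx d = {is. length is = length d \<and> (\<forall>k<length d. is ! k < d ! k)}"

definition tens :: "nat list \<Rightarrow> tensor \<Rightarrow> bool" where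
  "tens d A \<longleftrightarrow> (\<forall>i j. (i \<notin> idx d \<or> j \<notin> idx d) \<longrightarrow> A i j = 0)"

definition vtens :: "nat list \<Rightarrow> vtensor \<Rightarrow> bool" where
  "vtens d X \<longleftrightarrow> (\<forall>i. i \<notin> idx d \<longrightarrow> X i = 0)"

definition eprod :: "nat list \<Rightarrow> tensor \<Rightarrow> tensor \<Rightarrow> tensor" where
  "eprod d A B = (\<lambda>i j. if i \<in> idx d \<and> j \<in> idx d
      then (\<Sum>k\<in>idx d. A i k * B k j) else 0)"

definition eapp :: "nat list \<Rightarrow> tensor \<Rightarrow> vtensor \<Rightarrow> vtensor" where
  "eapp d A X = (\<lambda>i. if i \<in> idx d then (\<Sum>k\<in>idx d. A i k * X k) else 0)"

definition tident :: "nat list \<Rightarrow> tensor" where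
  "tident d = (\<lambda>i j. if i \<in> idx d \<and> j \<in> idx d \<and> i = j then 1 else 0)"

definition tH :: "tensor \<Rightarrow> tensor" where
  "tH A = (\<lambda>i j. cnj (A j i))"

definition hpd :: "nat list \<Rightarrow> tensor \<Rightarrow> bool" where
  "hpd d N \<longleftrightarrow> tens d N \<and> tH N = N \<and>
     (\<forall>X. vtens d X \<and> X \<noteq> (\<lambda>_. 0) \<longrightarrow>
        (let q = (\<Sum>i\<in>idx d. \<Sum>j\<in>idx d. cnj (X i) * N i j * X j) in q \<in> \<real> \<and> Re q > 0))"

definition tinv :: "nat list \<Rightarrow> tensor \<Rightarrow> tensor" where
  "tinv d A = (THE B. tens d B \<and> eprod d A B = tident d \<and> eprod d B A = tident d)"

definition tsqrt :: "nat list \<Rightarrow> tensor \<Rightarrow> tensor" where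
  "tsqrt d N = (THE S. hpd d S \<and> eprod d S S = N)"

definition wmp :: "nat list \<Rightarrow> tensor \<Rightarrow> tensor \<Rightarrow> tensor \<Rightarrow> tensor" where
  "wmp d M N A = (THE X. tens d X \<and>
     eprod d (eprod d A X) A = A \<and>
     eprod d (eprod d X A) X = X \<and>
     tH (eprod d M (eprod d A X)) = eprod d M (eprod d A X) \<and>
     tH (eprod d N (eprod d X A)) = eprod d N (eprod d X A))"

definition mp :: "nat list \<Rightarrow> tensor \<Rightarrow> tensor" where
  "mp d A = wmp d (tident d) (tident d) A"

definition wct :: "nat list \<Rightarrow> tensor \<Rightarrow> tensor \<Rightarrow> tensor" where
  "wct d N A = eprod d (tinv d N) (eprod d (tH A) N)"

definition tspec :: "nat list \<Rightarrow> tensor \<Rightarrow> complex set" where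
  "tspec d A = {c. \<exists>X. vtens d X \<and> X \<noteq> (\<lambda>_. 0) \<and> eapp d A X = (\<lambda>i. c * X i)}"

end

theory Submission
  imports Defs "Jordan_Normal_Form.Jordan_Normal_Form_Existence"
    "HOL-Computational_Algebra.Fundamental_Theorem_Algebra"
begin

definition gmm :: "'a set \<Rightarrow> ('a \<Rightarrow> 'a \<Rightarrow> complex) \<Rightarrow> ('a \<Rightarrow> 'a \<Rightarrow> complex) \<Rightarrow> ('a \<Rightarrow> 'a \<Rightarrow> complex)" where
  "gmm I A B = (\<lambda>i j. if i \<in> I \<and> j \<in> I then (\<Sum>k\<in>I. A i k * B k j) else 0)"
definition gmv :: "'a set \<Rightarrow> ('a \<Rightarrow> 'a \<Rightarrow> complex) \<Rightarrow> ('a \<Rightarrow> complex) \<Rightarrow> ('a \<Rightarrow> complex)" where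
  "gmv I A x = (\<lambda>i. if i \<in> I then (\<Sum>k\<in>I. A i k * x k) else 0)"
definition gid :: "'a set \<Rightarrow> ('a \<Rightarrow> 'a \<Rightarrow> complex)" where
  "gid I = (\<lambda>i j. if i \<in> I \<and> j \<in> I \<and> i = j then 1 else 0)"
definition gwf :: "'a set \<Rightarrow> ('a \<Rightarrow> 'a \<Rightarrow> complex) \<Rightarrow> bool" where
  "gwf I A \<longleftrightarrow> (\<forall>i j. (i \<notin> I \<or> j \<notin> I) \<longrightarrow> A i j = 0)"
definition gwfv :: "'a set \<Rightarrow> ('a \<Rightarrow> complex) \<Rightarrow> bool" where
  "gwfv I x \<longleftrightarrow> (\<forall>i. i \<notin> I \<longrightarrow> x i = 0)"
definition gadj :: "('a \<Rightarrow> 'a \<Rightarrow> complex) \<Rightarrow> ('a \<Rightarrow> 'a \<Rightarrow> complex)" where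
  "gadj A = (\<lambda>i j. cnj (A j i))"

lemma eig_exists:
  assumes fin: "finite I" and ne: "I \<noteq> {}"
  shows "\<exists>l x. gwfv I x \<and> (\<exists>i\<in>I. x i \<noteq> 0) \<and> gmv I H x = (\<lambda>i. l * x i)"
proof -
  define n where "n = card I"
  have n0: "n > 0" using fin ne by (simp add: n_def card_gt_0_iff)
  obtain h where h: "bij_betw h {0..<n} I" using ex_bij_betw_nat_finite[OF fin] n_def by blast
  define g where "g = inv_into {0..<n} h"
  have hg: "\<And>a. a \<in> I \<Longrightarrow> h (g a) = a" using h unfolding g_def by (meson bij_betw_inv_into_right)
  have gI: "\<And>a. a \<in> I \<Longrightarrow> g a < n" using h unfolding g_def
    by (metis atLeastLessThan_iff bij_betw_def inv_into_into)
  define M where "M = Matrix.mat n n (\<lambda>(i,j). H (h i) (h j))"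
  have M: "M \<in> carrier_mat n n" unfolding M_def by simp
  have "\<not> constant (poly (char_poly M))"
    using degree_monic_char_poly[OF M] n0 by (simp add: constant_degree)
  then obtain z where "poly (char_poly M) z = 0" using fundamental_theorem_of_algebra by blast
  then have "eigenvalue M z" using eigenvalue_root_char_poly[OF M] by simp
  then obtain v where ev: "eigenvector M v z" unfolding eigenvalue_def by blast
  then have v: "v \<in> carrier_vec n" "v \<noteq> 0\<^sub>v n" "M *\<^sub>v v = z \<cdot>\<^sub>v v"
    using M unfolding eigenvector_def by auto
  define x where "x = (\<lambda>a. if a \<in> I then v $ (g a) else 0)"
  have xh: "\<And>j. j < n \<Longrightarrow> x (h j) = v $ j"
  proof -
    fix j assume j: "j < n"
    have "h j \<in> I" using h j by (auto simp: bij_betw_def)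
    moreover have "g (h j) = j" using h j unfolding g_def by (simp add: bij_betw_inv_into_left)
    ultimately show "x (h j) = v $ j" unfolding x_def by simp
  qed
  have "gwfv I x" unfolding gwfv_def x_def by simp
  moreover have "\<exists>i\<in>I. x i \<noteq> 0"
  proof -
    obtain j where j: "j < n" "v $ j \<noteq> 0" using v(1,2) by (metis carrier_vecD eq_vecI index_zero_vec(1,2))
    then show ?thesis using xh h by (auto simp: bij_betw_def intro!: bexI[of _ "h j"])
  qed
  moreover have "gmv I H x = (\<lambda>i. z * x i)"
  proof
    fix a
    show "gmv I H x a = z * x a"
    proof (cases "a \<in> I")
      case False then show ?thesis by (simp add: gmv_def x_def)
    next
      case True
      have "gmv I H x a = (\<Sum>b\<in>I. H a b * x b)" using True by (simp add: gmv_def)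
      also have "\<dots> = (\<Sum>j\<in>{0..<n}. H a (h j) * x (h j))"
        using sum.reindex_bij_betw[OF h, of "\<lambda>b. H a b * x b"] by simp
      also have "\<dots> = (\<Sum>j\<in>{0..<n}. M $$ (g a, j) * v $ j)"
        using xh gI[OF True] hg[OF True] by (auto simp: M_def intro!: sum.cong)
      also have "\<dots> = (M *\<^sub>v v) $ (g a)"
        using gI[OF True] M v(1) by (simp add: scalar_prod_def)
      also have "\<dots> = z * x a" using v(3) v(1) gI[OF True] True by (simp add: x_def)
      finally show ?thesis .
    qed
  qed
  ultimately show ?thesis by blast
qed

lemma finite_idx: "finite (idx d)"
proof -
  have "idx d \<subseteq> {xs. set xs \<subseteq> {..<sum_list d} \<and> length xs = length d}"
  proof
    fix xs assume "xs \<in> idx d"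
    then have l: "length xs = length d" and lt: "\<forall>k<length d. xs ! k < d ! k" by (auto simp: idx_def)
    have "set xs \<subseteq> {..<sum_list d}"
    proof
      fix y assume "y \<in> set xs"
      then obtain k where k: "k < length xs" "xs ! k = y" by (auto simp: in_set_conv_nth)
      then have "y < d ! k" using lt l by auto
      also have "d ! k \<le> sum_list d" using k l by (simp add: elem_le_sum_list)
      finally show "y \<in> {..<sum_list d}" by simp
    qed
    then show "xs \<in> {xs. set xs \<subseteq> {..<sum_list d} \<and> length xs = length d}" using l by simp
  qed
  moreover have "finite {xs. set xs \<subseteq> {..<sum_list d} \<and> length xs = length d}"
    by (rule finite_lists_length_eq) simp
  ultimately show ?thesis by (rule finite_subset)
qed

lemma bridge:
  "eprod d = gmm (idx d)" "eapp d = gmv (idx d)" "tident d = gid (idx d)"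
  "tens d = gwf (idx d)" "vtens d = gwfv (idx d)" "tH = gadj"
  by (auto simp: fun_eq_iff eprod_def gmm_def eapp_def gmv_def tident_def gid_def tens_def gwf_def
      vtens_def gwfv_def tH_def gadj_def)

lemma gwf_gmm[simp]: "gwf I (gmm I A B)" by (simp add: gwf_def gmm_def)
lemma gwfv_gmv[simp]: "gwfv I (gmv I A x)" by (simp add: gwfv_def gmv_def)
lemma gwf_gid[simp]: "gwf I (gid I)" by (simp add: gwf_def gid_def)
lemma gwf_gadj: "gwf I A \<Longrightarrow> gwf I (gadj A)" by (auto simp: gwf_def gadj_def)
lemma gadj_gadj[simp]: "gadj (gadj A) = A" by (simp add: gadj_def)
lemma gadj_gid[simp]: "gadj (gid I) = gid I" by (auto simp: gadj_def gid_def fun_eq_iff)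

lemma gmm_assoc: assumes "finite I" shows "gmm I (gmm I A B) C = gmm I A (gmm I B C)"
proof (rule ext, rule ext)
  fix i j
  show "gmm I (gmm I A B) C i j = gmm I A (gmm I B C) i j"
  proof (cases "i \<in> I \<and> j \<in> I")
    case True
    have "gmm I (gmm I A B) C i j = (\<Sum>k\<in>I. (\<Sum>l\<in>I. A i l * B l k) * C k j)"
      using True by (simp add: gmm_def)
    also have "\<dots> = (\<Sum>k\<in>I. \<Sum>l\<in>I. A i l * B l k * C k j)" by (simp add: sum_distrib_right)
    also have "\<dots> = (\<Sum>l\<in>I. \<Sum>k\<in>I. A i l * B l k * C k j)" by (rule sum.swap)
    also have "\<dots> = (\<Sum>l\<in>I. A i l * (\<Sum>k\<in>I. B l k * C k j))"
      by (simp add: sum_distrib_left mult.assoc)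
    also have "\<dots> = gmm I A (gmm I B C) i j" using True by (simp add: gmm_def)
    finally show ?thesis .
  qed (auto simp: gmm_def)
qed

lemma gmm_gid_left: assumes "finite I" "gwf I A" shows "gmm I (gid I) A = A"
proof (rule ext, rule ext)
  fix i j
  show "gmm I (gid I) A i j = A i j"
  proof (cases "i \<in> I \<and> j \<in> I")
    case True
    have "gmm I (gid I) A i j = (\<Sum>k\<in>I. if k = i then A i j else 0)"
      using True by (auto simp: gmm_def gid_def intro!: sum.cong)
    also have "\<dots> = A i j" using True assms(1) by simp
    finally show ?thesis .
  qed (use assms in \<open>auto simp: gmm_def gwf_def\<close>)
qed

lemma gmm_gid_right: assumes "finite I" "gwf I A" shows "gmm I A (gid I) = A"
proof (rule ext, rule ext)
  fix i j
  show "gmm I A (gid I) i j = A i j"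
  proof (cases "i \<in> I \<and> j \<in> I")
    case True
    have "gmm I A (gid I) i j = (\<Sum>k\<in>I. if k = j then A i j else 0)"
      using True by (auto simp: gmm_def gid_def intro!: sum.cong)
    also have "\<dots> = A i j" using True assms(1) by simp
    finally show ?thesis .
  qed (use assms in \<open>auto simp: gmm_def gwf_def\<close>)
qed

lemma gadj_gmm: "gadj (gmm I A B) = gmm I (gadj B) (gadj A)"
  by (auto simp: gadj_def gmm_def fun_eq_iff mult.commute)

lemma gmv_gmm: assumes "finite I" shows "gmv I (gmm I A B) x = gmv I A (gmv I B x)"
proof
  fix i
  show "gmv I (gmm I A B) x i = gmv I A (gmv I B x) i"
  proof (cases "i \<in> I")
    case True
    have "gmv I (gmm I A B) x i = (\<Sum>k\<in>I. (\<Sum>l\<in>I. A i l * B l k) * x k)"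
      using True by (simp add: gmm_def gmv_def)
    also have "\<dots> = (\<Sum>k\<in>I. \<Sum>l\<in>I. A i l * B l k * x k)" by (simp add: sum_distrib_right)
    also have "\<dots> = (\<Sum>l\<in>I. \<Sum>k\<in>I. A i l * B l k * x k)" by (rule sum.swap)
    also have "\<dots> = (\<Sum>l\<in>I. A i l * (\<Sum>k\<in>I. B l k * x k))"
      by (simp add: sum_distrib_left mult.assoc)
    also have "\<dots> = gmv I A (gmv I B x) i" using True by (simp add: gmv_def)
    finally show ?thesis .
  qed (auto simp: gmv_def)
qed

lemma gmv_gid: assumes "finite I" "gwfv I x" shows "gmv I (gid I) x = x"
proof
  fix i
  show "gmv I (gid I) x i = x i"
  proof (cases "i \<in> I")
    case True
    have "gmv I (gid I) x i = (\<Sum>k\<in>I. if k = i then x i else 0)"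
      using True by (auto simp: gmv_def gid_def intro!: sum.cong)
    also have "\<dots> = x i" using True assms(1) by simp
    finally show ?thesis .
  qed (use assms in \<open>auto simp: gmv_def gwfv_def\<close>)
qed

lemma gmv_scale: "gmv I A (\<lambda>i. c * x i) = (\<lambda>i. c * gmv I A x i)"
  by (auto simp: gmv_def fun_eq_iff sum_distrib_left mult.commute mult.left_commute)

lemma sum_single:
  assumes "finite I" "i0 \<in> I" "\<And>k. k \<in> I \<Longrightarrow> k \<noteq> i0 \<Longrightarrow> f k = 0"
  shows "sum f I = f i0"
proof -
  have "sum f I = f i0 + sum f (I - {i0})" using assms(1,2) by (simp add: sum.remove)
  also have "sum f (I - {i0}) = 0" using assms(3) by (intro sum.neutral) auto
  finally show ?thesis by simp
qed

lemma householder: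
  assumes fin: "finite I" and i0: "i0 \<in> I" and v: "gwfv I v"
    and nv: "(\<Sum>k\<in>I. cnj (v k) * v k) = 1"
    and vr: "cnj (v i0) = v i0" and vneg: "Re (v i0) \<le> 0"
  shows "\<exists>W. gwf I W \<and> gadj W = W \<and> gmm I W W = gid I \<and>
           gmv I W (\<lambda>i. if i = i0 then 1 else 0) = v"
proof -
  define e where "e = (\<lambda>i. if i = i0 then (1::complex) else 0)"
  define w where "w = (\<lambda>i. e i - v i)"
  define q where "q = 2 - 2 * v i0"
  have "Re q \<ge> 2" using vneg unfolding q_def by simp
  then have q0: "q \<noteq> 0" by auto
  have cq: "cnj q = q" using vr unfolding q_def by simp
  have sumq: "(\<Sum>k\<in>I. cnj (w k) * w k) = q"
  proof -
    have "(\<Sum>k\<in>I. cnj (w k) * w k) = (\<Sum>k\<in>I. cnj (e k) * e k - cnj (e k) * v k - cnj (v k) * e k + cnj (v k) * v k)"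
      unfolding w_def by (intro sum.cong) (auto simp: algebra_simps)
    also have "\<dots> = (\<Sum>k\<in>I. cnj (e k) * e k) - (\<Sum>k\<in>I. cnj (e k) * v k) - (\<Sum>k\<in>I. cnj (v k) * e k) + (\<Sum>k\<in>I. cnj (v k) * v k)"
      by (simp add: sum.distrib sum_subtractf)
    also have "(\<Sum>k\<in>I. cnj (e k) * e k) = 1" using fin i0 by (subst sum_single[of _ i0]) (auto simp: e_def)
    also have "(\<Sum>k\<in>I. cnj (e k) * v k) = v i0" using fin i0 by (subst sum_single[of _ i0]) (auto simp: e_def)
    also have "(\<Sum>k\<in>I. cnj (v k) * e k) = v i0" using fin i0 vr by (subst sum_single[of _ i0]) (auto simp: e_def)
    finally show ?thesis using nv unfolding q_def by simp
  qed
  define a where "a = 2 / q"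
  have ca: "cnj a = a" using cq unfolding a_def by simp
  have aq: "a * q = 2" using q0 unfolding a_def by simp
  define W where "W = (\<lambda>i j. if i \<in> I \<and> j \<in> I then (if i = j then 1 else 0) - a * w i * cnj (w j) else 0)"
  have "gwf I W" unfolding W_def gwf_def by auto
  moreover have "gadj W = W" unfolding W_def gadj_def using ca by (auto simp: fun_eq_iff)
  moreover have "gmm I W W = gid I"
  proof (intro ext)
    fix i j
    show "gmm I W W i j = gid I i j"
    proof (cases "i \<in> I \<and> j \<in> I")
      case True
      let ?d = "\<lambda>i j. if i = j then (1::complex) else 0"
      have "gmm I W W i j = (\<Sum>k\<in>I. (?d i k - a * w i * cnj (w k)) * (?d k j - a * w k * cnj (w j)))"
        using True by (simp add: gmm_def W_def)
      also have "\<dots> = (\<Sum>k\<in>I. ?d i k * ?d k j - ?d i k * (a * w k * cnj (w j)) - (a * w i * cnj (w k)) * ?d k j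
                    + (a * a * w i * cnj (w j)) * (cnj (w k) * w k))"
        by (intro sum.cong) (auto simp: algebra_simps)
      also have "\<dots> = (\<Sum>k\<in>I. ?d i k * ?d k j) - (\<Sum>k\<in>I. ?d i k * (a * w k * cnj (w j)))
           - (\<Sum>k\<in>I. (a * w i * cnj (w k)) * ?d k j) + (a * a * w i * cnj (w j)) * (\<Sum>k\<in>I. cnj (w k) * w k)"
        by (simp add: sum.distrib sum_subtractf sum_distrib_left)
      also have "(\<Sum>k\<in>I. ?d i k * ?d k j) = ?d i j" using True fin by (subst sum_single[of _ i]) auto
      also have "(\<Sum>k\<in>I. ?d i k * (a * w k * cnj (w j))) = a * w i * cnj (w j)"
        using True fin by (subst sum_single[of _ i]) auto
      also have "(\<Sum>k\<in>I. (a * w i * cnj (w k)) * ?d k j) = a * w i * cnj (w j)"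
        using True fin by (subst sum_single[of _ j]) auto
      also have "(a * a * w i * cnj (w j)) * (\<Sum>k\<in>I. cnj (w k) * w k) = 2 * (a * w i * cnj (w j))"
        unfolding sumq using aq by (simp add: algebra_simps)
      finally show ?thesis using True by (simp add: gid_def)
    qed (auto simp: gmm_def gid_def)
  qed
  moreover have "gmv I W e = v"
  proof
    fix i
    show "gmv I W e i = v i"
    proof (cases "i \<in> I")
      case True
      have "gmv I W e i = W i i0" using True fin i0 by (simp add: gmv_def, subst sum_single[of _ i0]) (auto simp: e_def)
      also have "\<dots> = e i - a * w i * cnj (w i0)" using True i0 by (simp add: W_def e_def)
      also have "cnj (w i0) = q / 2" using vr unfolding w_def e_def q_def by simp
      also have "a * w i * (q / 2) = w i" using aq by (simp add: algebra_simps)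
      finally show ?thesis unfolding w_def by simp
    qed (use v in \<open>auto simp: gmv_def gwfv_def\<close>)
  qed
  ultimately show ?thesis unfolding e_def by blast
qed

definition gdiag :: "'a set \<Rightarrow> ('a \<Rightarrow> complex) \<Rightarrow> ('a \<Rightarrow> 'a \<Rightarrow> complex)" where
  "gdiag I D = (\<lambda>i j. if i \<in> I \<and> j \<in> I \<and> i = j then D i else 0)"

definition bext :: "'a \<Rightarrow> 'a set \<Rightarrow> complex \<Rightarrow> ('a \<Rightarrow> 'a \<Rightarrow> complex) \<Rightarrow> ('a \<Rightarrow> 'a \<Rightarrow> complex)" where
  "bext i0 F x X = (\<lambda>a b. if a = i0 \<and> b = i0 then x else if a \<in> F \<and> b \<in> F then X a b else 0)"

lemma gwf_gdiag[simp]: "gwf I (gdiag I D)" by (simp add: gwf_def gdiag_def)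

lemma gmm_out: "\<not> (a \<in> I \<and> b \<in> I) \<Longrightarrow> gmm I A B a b = 0"
  unfolding gmm_def by (simp only: if_False)

lemma bext_mult:
  assumes fin: "finite F" and i0: "i0 \<notin> F"
  shows "gmm (insert i0 F) (bext i0 F x X) (bext i0 F y Y) = bext i0 F (x * y) (gmm F X Y)"
proof (intro ext)
  fix a b
  show "gmm (insert i0 F) (bext i0 F x X) (bext i0 F y Y) a b = bext i0 F (x * y) (gmm F X Y) a b"
  proof (cases "a \<in> insert i0 F \<and> b \<in> insert i0 F")
    case True
    have s0: "gmm (insert i0 F) (bext i0 F x X) (bext i0 F y Y) a b
        = bext i0 F x X a i0 * bext i0 F y Y i0 b + (\<Sum>k\<in>F. bext i0 F x X a k * bext i0 F y Y k b)"
      using True fin i0 by (simp add: gmm_def)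
    have s1: "(\<Sum>k\<in>F. bext i0 F x X a k * bext i0 F y Y k b)
        = (\<Sum>k\<in>F. (if a \<in> F then X a k else 0) * (if b \<in> F then Y k b else 0))"
      by (rule sum.cong) (use i0 in \<open>auto simp: bext_def\<close>)
    show ?thesis
    proof (cases "a = i0")
      case True
      then show ?thesis using s0 s1 i0 \<open>a \<in> insert i0 F \<and> b \<in> insert i0 F\<close>
        by (cases "b = i0") (simp_all add: bext_def)
    next
      case False
      then have aF: "a \<in> F" using True by simp
      show ?thesis
      proof (cases "b = i0")
        case True
        then show ?thesis using s0 s1 i0 aF False by (simp add: bext_def)
      next
        case bF: False
        then have "b \<in> F" using \<open>a \<in> insert i0 F \<and> b \<in> insert i0 F\<close> by simp
        then show ?thesis using s0 s1 i0 aF False bF by (simp add: bext_def gmm_def)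
      qed
    qed
  next
    case False
    then have "gmm (insert i0 F) (bext i0 F x X) (bext i0 F y Y) a b = 0" by (rule gmm_out)
    moreover have "bext i0 F (x * y) (gmm F X Y) a b = 0" using False unfolding bext_def by auto
    ultimately show ?thesis by simp
  qed
qed

lemma bext_gadj: "gadj (bext i0 F x X) = bext i0 F (cnj x) (gadj X)"
  by (auto simp: fun_eq_iff gadj_def bext_def)

lemma bext_gid: "i0 \<notin> F \<Longrightarrow> gid (insert i0 F) = bext i0 F 1 (gid F)"
  by (auto simp: fun_eq_iff gid_def bext_def)

lemma bext_gdiag: "i0 \<notin> F \<Longrightarrow> gdiag (insert i0 F) D = bext i0 F (D i0) (gdiag F D)"
  by (auto simp: fun_eq_iff gdiag_def bext_def)

lemma gwf_bext: "gwf F X \<Longrightarrow> gwf (insert i0 F) (bext i0 F x X)"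
  by (auto simp: gwf_def bext_def)


lemma norm_eig:
  assumes fin: "finite I" and i0: "i0 \<in> I" and x: "gwfv I x" and nz: "j \<in> I" "x j \<noteq> 0"
    and ev: "gmv I H x = (\<lambda>i. l * x i)"
  shows "\<exists>v. gwfv I v \<and> (\<Sum>k\<in>I. cnj (v k) * v k) = 1 \<and> cnj (v i0) = v i0 \<and> Re (v i0) \<le> 0
             \<and> gmv I H v = (\<lambda>i. l * v i)"
proof -
  define r where "r = (\<Sum>k\<in>I. (cmod (x k))\<^sup>2)"
  have r: "r > 0" unfolding r_def using fin nz by (intro sum_pos2[of _ j]) auto
  define ph where "ph = (if x i0 = 0 then 1 else cnj (x i0) / cmod (x i0))"
  have ph: "cmod ph = 1" unfolding ph_def by (simp add: norm_divide)
  define c where "c = - ph / complex_of_real (sqrt r)"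
  define v where "v = (\<lambda>i. c * x i)"
  have "gwfv I v" using x unfolding v_def gwfv_def by simp
  moreover have "(\<Sum>k\<in>I. cnj (v k) * v k) = 1"
  proof -
    have "(\<Sum>k\<in>I. cnj (v k) * v k) = (cnj c * c) * (\<Sum>k\<in>I. cnj (x k) * x k)"
      unfolding v_def by (simp add: sum_distrib_left algebra_simps)
    also have "(\<Sum>k\<in>I. cnj (x k) * x k) = of_real r"
      unfolding r_def of_real_sum by (intro sum.cong refl) (metis complex_norm_square mult.commute of_real_power)
    also have "cnj c * c = of_real ((cmod c)\<^sup>2)" by (metis complex_norm_square mult.commute of_real_power)
    also have "cmod c = 1 / sqrt r" unfolding c_def using ph r by (simp add: norm_divide)
    finally show ?thesis using r by (simp add: power_divide)
  qed
  moreover have "\<exists>t. v i0 = of_real t \<and> t \<le> 0"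
  proof (cases "x i0 = 0")
    case True then show ?thesis unfolding v_def by auto
  next
    case False
    have sq: "x i0 * cnj (x i0) = of_real (cmod (x i0)) * of_real (cmod (x i0))"
      by (simp only: complex_norm_square[symmetric] power2_eq_square of_real_mult)
    have cz: "complex_of_real (cmod (x i0)) \<noteq> 0" using False by simp
    have "ph * x i0 = (x i0 * cnj (x i0)) / of_real (cmod (x i0))" using False unfolding ph_def
      by (simp add: mult_ac)
    also have "\<dots> = of_real (cmod (x i0))" unfolding sq using cz by simp
    finally have "ph * x i0 = of_real (cmod (x i0))" .
    then have "v i0 = of_real (- cmod (x i0) / sqrt r)" unfolding v_def c_def by simp
    moreover have "- cmod (x i0) / sqrt r \<le> 0" using r by simp
    ultimately show ?thesis by blast
  qed
  then have "cnj (v i0) = v i0 \<and> Re (v i0) \<le> 0" by auto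
  moreover have "gmv I H v = (\<lambda>i. l * v i)" unfolding v_def gmv_scale ev by (simp add: algebra_simps)
  ultimately show ?thesis by blast
qed

lemma gmm_cancel:
  assumes fin: "finite I" and WW: "gmm I W V = gid I" and X: "gwf I X"
  shows "gmm I W (gmm I V X) = X"
  using gmm_assoc[OF fin, of W V X] WW gmm_gid_left[OF fin X] by simp

theorem spectral:
  assumes "finite I" "gwf I H" "gadj H = H"
  shows "\<exists>U D. gwf I U \<and> gmm I (gadj U) U = gid I \<and> gmm I U (gadj U) = gid I
              \<and> H = gmm I U (gmm I (gdiag I D) (gadj U))"
  using assms
proof (induction I arbitrary: H rule: finite_induct)
  case empty
  have "H = (\<lambda>_ _. 0)" using empty.prems by (auto simp: gwf_def fun_eq_iff)
  then show ?case
    by (intro exI[of _ "\<lambda>_ _. 0"] exI[of _ "\<lambda>_. 0"]) (auto simp: gwf_def gmm_def gid_def fun_eq_iff)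
next
  case (insert i0 F)
  define I where "I = insert i0 F"
  have fin: "finite I" using insert by (simp add: I_def)
  have i0: "i0 \<in> I" by (simp add: I_def)
  have HI: "gwf I H" "gadj H = H" using insert.prems by (auto simp: I_def)
  obtain l x where x: "gwfv I x" "\<exists>i\<in>I. x i \<noteq> 0" "gmv I H x = (\<lambda>i. l * x i)"
    using eig_exists[OF fin, of H] i0 by blast
  then obtain j where j: "j \<in> I" "x j \<noteq> 0" by blast
  obtain v where v: "gwfv I v" "(\<Sum>k\<in>I. cnj (v k) * v k) = 1" "cnj (v i0) = v i0" "Re (v i0) \<le> 0"
      "gmv I H v = (\<lambda>i. l * v i)"
    using norm_eig[OF fin i0 x(1) j x(3)] by blast
  define e where "e = (\<lambda>i. if i = i0 then (1::complex) else 0)"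
  obtain W where W: "gwf I W" "gadj W = W" "gmm I W W = gid I" "gmv I W e = v"
    using householder[OF fin i0 v(1-4)] unfolding e_def by blast
  define H1 where "H1 = gmm I W (gmm I H W)"
  have H1adj: "gadj H1 = H1" unfolding H1_def by (simp add: gadj_gmm W(2) HI(2) gmm_assoc[OF fin])
  have ewf: "gwfv I e" using i0 by (auto simp: gwfv_def e_def)
  have Wv: "gmv I W v = e"
    using W(3,4) ewf fin by (metis gmv_gmm gmv_gid)
  have col: "gmv I H1 e = (\<lambda>i. l * e i)"
    unfolding H1_def gmv_gmm[OF fin] W(4) v(5) gmv_scale Wv ..
  have colH: "H1 a i0 = l * e a" if a: "a \<in> I" for a
  proof -
    have "gmv I H1 e a = H1 a i0" using a fin i0
      by (simp add: gmv_def, subst sum_single[of _ i0]) (auto simp: e_def)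
    then show ?thesis using col by (metis)
  qed
  have H1F1: "H1 a i0 = 0" if "a \<in> F" for a using colH[of a] that insert.hyps(2) by (auto simp: I_def e_def)
  have H1s: "cnj (H1 b a) = H1 a b" for a b using H1adj by (metis gadj_def)
  have H1F2: "H1 i0 a = 0" if "a \<in> F" for a using H1F1[OF that] H1s[of i0 a] by simp
  have H1wf: "gwf I H1" by (simp add: H1_def)
  define H2 where "H2 = (\<lambda>a b. if a \<in> F \<and> b \<in> F then H1 a b else 0)"
  have H2wf: "gwf F H2" by (auto simp: gwf_def H2_def)
  have H2adj: "gadj H2 = H2" unfolding H2_def gadj_def using H1s by (auto simp: fun_eq_iff)
  have H1ext: "H1 = bext i0 F (H1 i0 i0) H2"
  proof (intro ext)
    fix a b
    show "H1 a b = bext i0 F (H1 i0 i0) H2 a b"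
      using H1wf H1F1 H1F2 insert.hyps(2) unfolding bext_def H2_def gwf_def I_def
      by (cases "a = i0"; cases "b = i0"; cases "a \<in> F"; cases "b \<in> F") auto
  qed
  obtain U2 D2 where U2: "gwf F U2" "gmm F (gadj U2) U2 = gid F" "gmm F U2 (gadj U2) = gid F"
      "H2 = gmm F U2 (gmm F (gdiag F D2) (gadj U2))"
    using insert.IH[OF H2wf H2adj] by blast
  define U3 where "U3 = bext i0 F 1 U2"
  define D3 where "D3 = D2(i0 := H1 i0 i0)"
  have "gdiag F D3 = gdiag F D2" using insert.hyps(2) by (auto simp: gdiag_def D3_def fun_eq_iff)
  then have gd: "gdiag I D3 = bext i0 F (H1 i0 i0) (gdiag F D2)"
    unfolding I_def bext_gdiag[OF insert.hyps(2)] by (simp add: D3_def)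
  have U3wf: "gwf I U3" unfolding U3_def I_def by (rule gwf_bext[OF U2(1)])
  have U3a: "gmm I (gadj U3) U3 = gid I"
    unfolding U3_def I_def bext_gadj bext_mult[OF insert.hyps] U2(2) bext_gid[OF insert.hyps(2)] by simp
  have U3b: "gmm I U3 (gadj U3) = gid I"
    unfolding U3_def I_def bext_gadj bext_mult[OF insert.hyps] U2(3) bext_gid[OF insert.hyps(2)] by simp
  have H1d: "H1 = gmm I U3 (gmm I (gdiag I D3) (gadj U3))"
    unfolding gd unfolding U3_def I_def bext_gadj bext_mult[OF insert.hyps] U2(4)[symmetric]
    by (simp add: H1ext[symmetric])
  define U where "U = gmm I W U3"
  have gU: "gadj U = gmm I (gadj U3) W" unfolding U_def gadj_gmm W(2) ..
  have "gmm I (gadj U) U = gid I"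
  proof -
    have "gmm I (gadj U) U = gmm I (gadj U3) (gmm I W (gmm I W U3))"
      by (simp only: gU) (simp only: U_def gmm_assoc[OF fin])
    also have "gmm I W (gmm I W U3) = U3" by (rule gmm_cancel[OF fin W(3) U3wf])
    finally show ?thesis using U3a by simp
  qed
  moreover have "gmm I U (gadj U) = gid I"
  proof -
    have "gmm I U (gadj U) = gmm I W (gmm I U3 (gmm I (gadj U3) W))"
      by (simp only: gU) (simp only: U_def gmm_assoc[OF fin])
    also have "gmm I U3 (gmm I (gadj U3) W) = W" by (rule gmm_cancel[OF fin U3b W(1)])
    finally show ?thesis using W(3) by simp
  qed
  moreover have "H = gmm I U (gmm I (gdiag I D3) (gadj U))"
  proof -
    have "gmm I W (gmm I H1 W) = gmm I W (gmm I W (gmm I H (gmm I W W)))"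
      unfolding H1_def gmm_assoc[OF fin] ..
    also have "\<dots> = H" using gmm_cancel[OF fin W(3) HI(1)] W(3) gmm_gid_right[OF fin HI(1)] by simp
    finally have "H = gmm I W (gmm I H1 W)" by simp
    also have "\<dots> = gmm I U (gmm I (gdiag I D3) (gadj U))"
      by (simp only: H1d gU) (simp only: U_def gmm_assoc[OF fin])
    finally show ?thesis .
  qed
  moreover have "gwf I U" by (simp add: U_def)
  ultimately show ?case unfolding I_def by blast
qed

definition msub :: "('a \<Rightarrow> 'a \<Rightarrow> complex) \<Rightarrow> ('a \<Rightarrow> 'a \<Rightarrow> complex) \<Rightarrow> ('a \<Rightarrow> 'a \<Rightarrow> complex)" where
  "msub A B = (\<lambda>i j. A i j - B i j)"

definition gunit :: "'a set \<Rightarrow> ('a \<Rightarrow> 'a \<Rightarrow> complex) \<Rightarrow> bool" where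
  "gunit I U \<longleftrightarrow> gwf I U \<and> gmm I (gadj U) U = gid I \<and> gmm I U (gadj U) = gid I"

definition qf :: "'a set \<Rightarrow> ('a \<Rightarrow> 'a \<Rightarrow> complex) \<Rightarrow> ('a \<Rightarrow> complex) \<Rightarrow> complex" where
  "qf I N X = (\<Sum>i\<in>I. \<Sum>j\<in>I. cnj (X i) * N i j * X j)"

definition ghpd :: "'a set \<Rightarrow> ('a \<Rightarrow> 'a \<Rightarrow> complex) \<Rightarrow> bool" where
  "ghpd I N \<longleftrightarrow> gwf I N \<and> gadj N = N \<and>
     (\<forall>X. gwfv I X \<and> X \<noteq> (\<lambda>_. 0) \<longrightarrow> qf I N X \<in> \<real> \<and> Re (qf I N X) > 0)"

lemma hpd_bridge: "hpd d N = ghpd (idx d) N"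
  unfolding hpd_def ghpd_def qf_def bridge Let_def ..

lemma gmm_msub_left: "gmm I (msub A B) C = msub (gmm I A C) (gmm I B C)"
  by (auto simp: fun_eq_iff gmm_def msub_def sum_subtractf left_diff_distrib)
lemma gmm_msub_right: "gmm I C (msub A B) = msub (gmm I C A) (gmm I C B)"
  by (auto simp: fun_eq_iff gmm_def msub_def sum_subtractf right_diff_distrib)
lemma gadj_msub: "gadj (msub A B) = msub (gadj A) (gadj B)"
  by (auto simp: fun_eq_iff gadj_def msub_def)
lemma gwf_msub: "gwf I A \<Longrightarrow> gwf I B \<Longrightarrow> gwf I (msub A B)"
  by (auto simp: gwf_def msub_def)

lemma gdiag_mult: assumes "finite I"
  shows "gmm I (gdiag I A) (gdiag I B) = gdiag I (\<lambda>k. A k * B k)"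
proof (intro ext)
  fix i j
  show "gmm I (gdiag I A) (gdiag I B) i j = gdiag I (\<lambda>k. A k * B k) i j"
  proof (cases "i \<in> I \<and> j \<in> I")
    case True
    show ?thesis
    proof (cases "i = j")
      case True
      then show ?thesis using assms \<open>i \<in> I \<and> j \<in> I\<close>
        by (simp add: gmm_def gdiag_def, subst sum_single[of _ i]) auto
    next
      case False
      then show ?thesis using assms \<open>i \<in> I \<and> j \<in> I\<close>
        by (simp add: gmm_def gdiag_def)
    qed
  qed (auto simp: gmm_def gdiag_def)
qed

lemma gdiag_one: "gdiag I (\<lambda>_. 1) = gid I" by (auto simp: fun_eq_iff gdiag_def gid_def)
lemma gadj_gdiag: "gadj (gdiag I A) = gdiag I (\<lambda>k. cnj (A k))" by (auto simp: fun_eq_iff gdiag_def gadj_def)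

lemma gdiag_left_entry: assumes "finite I" "k \<in> I"
  shows "gmm I (gdiag I D) F k k = D k * F k k"
  using assms by (simp add: gmm_def gdiag_def, subst sum_single[of _ k]) auto

lemma gdiag_right_entry: assumes "finite I" "k \<in> I"
  shows "gmm I F (gdiag I D) k k = F k k * D k"
  using assms by (simp add: gmm_def gdiag_def, subst sum_single[of _ k]) auto

lemma unit_conj:
  assumes fin: "finite I" and U: "gunit I U" and X: "gwf I X"
  shows "gmm I (gadj U) (gmm I (gmm I U (gmm I X (gadj U))) U) = X"
proof -
  have "gmm I (gadj U) (gmm I (gmm I U (gmm I X (gadj U))) U)
      = gmm I (gadj U) (gmm I U (gmm I X (gmm I (gadj U) U)))" by (simp add: gmm_assoc[OF fin])
  also have "gmm I X (gmm I (gadj U) U) = X" using U gmm_gid_right[OF fin X] by (simp add: gunit_def)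
  also have "gmm I (gadj U) (gmm I U X) = X" using U gmm_cancel[OF fin _ X] by (simp add: gunit_def)
  finally show ?thesis .
qed

lemma qf_col: assumes fin: "finite I" and k: "k \<in> I"
  shows "qf I N (\<lambda>i. U i k) = gmm I (gadj U) (gmm I N U) k k"
proof -
  have "gmm I (gadj U) (gmm I N U) k k = (\<Sum>i\<in>I. cnj (U i k) * (\<Sum>j\<in>I. N i j * U j k))"
    using k by (simp add: gmm_def gadj_def)
  also have "\<dots> = qf I N (\<lambda>i. U i k)" unfolding qf_def by (simp add: sum_distrib_left mult.assoc)
  finally show ?thesis ..
qed

lemma col_nz: assumes U: "gunit I U" and k: "k \<in> I"
  shows "(\<lambda>i. U i k) \<noteq> (\<lambda>_. 0)"
proof
  assume "(\<lambda>i. U i k) = (\<lambda>_. 0)"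
  then have "gmm I (gadj U) U k k = 0" by (simp add: gmm_def gadj_def fun_eq_iff)
  moreover have "gmm I (gadj U) U k k = 1" using U k by (simp add: gunit_def gid_def)
  ultimately show False by simp
qed

lemma col_wf: "gwf I U \<Longrightarrow> k \<in> I \<Longrightarrow> gwfv I (\<lambda>i. U i k)"
  by (auto simp: gwf_def gwfv_def)

lemma decomp_diag:
  assumes fin: "finite I" and U: "gunit I U" and N: "N = gmm I U (gmm I (gdiag I D) (gadj U))"
  shows "gmm I (gadj U) (gmm I N U) = gdiag I D"
  using unit_conj[OF fin U gwf_gdiag] N by (simp add: gmm_assoc[OF fin])

lemma hpd_diag_pos:
  assumes fin: "finite I" and hp: "ghpd I N" and U: "gunit I U"
    and N: "N = gmm I U (gmm I (gdiag I D) (gadj U))" and k: "k \<in> I"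
  shows "D k \<in> \<real> \<and> Re (D k) > 0"
proof -
  have "qf I N (\<lambda>i. U i k) = D k"
    unfolding qf_col[OF fin k] decomp_diag[OF fin U N] using k by (simp add: gdiag_def)
  moreover have "gwfv I (\<lambda>i. U i k)" using U k by (simp add: gunit_def col_wf)
  ultimately show ?thesis using hp col_nz[OF U k] unfolding ghpd_def by metis
qed

lemma herm_diag_real:
  assumes fin: "finite I" and H: "gadj H = H" and U: "gunit I U"
    and N: "H = gmm I U (gmm I (gdiag I D) (gadj U))" and k: "k \<in> I"
  shows "cnj (D k) = D k"
proof -
  have "gadj (gmm I (gadj U) (gmm I H U)) = gmm I (gadj U) (gmm I H U)"
    by (simp add: gadj_gmm H gmm_assoc[OF fin])
  then have "gadj (gdiag I D) = gdiag I D" unfolding decomp_diag[OF fin U N] .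
  then have "gadj (gdiag I D) k k = gdiag I D k k" by simp
  then show ?thesis using k by (simp add: gadj_def gdiag_def)
qed

lemma udu_entry: assumes fin: "finite I" and ij: "i \<in> I" "j \<in> I"
  shows "gmm I U (gmm I (gdiag I D) (gadj U)) i j = (\<Sum>k\<in>I. U i k * D k * cnj (U j k))"
proof -
  have "\<And>k. k \<in> I \<Longrightarrow> gmm I (gdiag I D) (gadj U) k j = D k * cnj (U j k)"
    using fin ij by (simp add: gmm_def gdiag_def gadj_def, subst sum_single) auto
  then show ?thesis using ij by (simp add: gmm_def mult.assoc)
qed

lemma udu_mult:
  assumes fin: "finite I" and U: "gunit I U" and A: "gwf I A" and B: "gwf I B"
  shows "gmm I (gmm I U (gmm I A (gadj U))) (gmm I U (gmm I B (gadj U))) = gmm I U (gmm I (gmm I A B) (gadj U))"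
proof -
  have "gmm I (gmm I U (gmm I A (gadj U))) (gmm I U (gmm I B (gadj U)))
      = gmm I U (gmm I A (gmm I (gadj U) (gmm I U (gmm I B (gadj U)))))" by (simp add: gmm_assoc[OF fin])
  also have "gmm I (gadj U) (gmm I U (gmm I B (gadj U))) = gmm I B (gadj U)"
    using U by (intro gmm_cancel[OF fin]) (auto simp: gunit_def)
  finally show ?thesis by (simp add: gmm_assoc[OF fin])
qed

lemma gdiag_cong: "(\<And>k. k \<in> I \<Longrightarrow> A k = B k) \<Longrightarrow> gdiag I A = gdiag I B"
  by (auto simp: gdiag_def fun_eq_iff)

lemma diag_pos_hpd:
  assumes fin: "finite I" and U: "gunit I U" and Dp: "\<And>k. k \<in> I \<Longrightarrow> D k \<in> \<real> \<and> Re (D k) > 0"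
  shows "ghpd I (gmm I U (gmm I (gdiag I D) (gadj U)))" (is "ghpd I ?M")
proof -
  have Uwf: "gwf I U" using U by (simp add: gunit_def)
  have "gadj ?M = ?M"
  proof -
    have "gdiag I (\<lambda>k. cnj (D k)) = gdiag I D" using Dp by (intro gdiag_cong) (simp add: Reals_cnj_iff)
    then show ?thesis by (simp add: gadj_gmm gadj_gdiag gmm_assoc[OF fin])
  qed
  moreover have "qf I ?M X \<in> \<real> \<and> Re (qf I ?M X) > 0" if X: "gwfv I X" "X \<noteq> (\<lambda>_. 0)" for X
  proof -
    define y where "y = gmv I (gadj U) X"
    have yk: "y k = (\<Sum>j\<in>I. cnj (U j k) * X j)" if "k \<in> I" for k
      using that by (simp add: y_def gmv_def gadj_def)
    have "qf I ?M X = (\<Sum>i\<in>I. \<Sum>j\<in>I. \<Sum>k\<in>I. D k * (cnj (X i) * U i k) * (cnj (U j k) * X j))"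
      unfolding qf_def
      by (intro sum.cong refl) (simp add: udu_entry[OF fin] sum_distrib_left sum_distrib_right mult_ac)
    also have "\<dots> = (\<Sum>i\<in>I. \<Sum>k\<in>I. \<Sum>j\<in>I. D k * (cnj (X i) * U i k) * (cnj (U j k) * X j))"
      by (intro sum.cong refl sum.swap)
    also have "\<dots> = (\<Sum>k\<in>I. \<Sum>i\<in>I. \<Sum>j\<in>I. D k * (cnj (X i) * U i k) * (cnj (U j k) * X j))"
      by (rule sum.swap)
    also have "\<dots> = (\<Sum>k\<in>I. D k * (cnj (y k) * y k))"
    proof (intro sum.cong refl)
      fix k assume k: "k \<in> I"
      have cy: "cnj (y k) = (\<Sum>i\<in>I. cnj (X i) * U i k)" using k by (simp add: yk mult.commute)
      show "(\<Sum>i\<in>I. \<Sum>j\<in>I. D k * (cnj (X i) * U i k) * (cnj (U j k) * X j)) = D k * (cnj (y k) * y k)"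
        unfolding cy yk[OF k] by (simp add: sum_distrib_left sum_distrib_right mult_ac)
    qed
    also have "\<dots> = of_real (\<Sum>k\<in>I. Re (D k) * (cmod (y k))\<^sup>2)"
      unfolding of_real_sum
    proof (intro sum.cong refl)
      fix k assume k: "k \<in> I"
      have "D k = of_real (Re (D k))" using Dp[OF k] by (simp add: complex_is_Real_iff)
      moreover have "cnj (y k) * y k = of_real ((cmod (y k))\<^sup>2)"
        by (metis complex_norm_square mult.commute of_real_power)
      ultimately show "D k * (cnj (y k) * y k) = of_real (Re (D k) * (cmod (y k))\<^sup>2)" by simp
    qed
    finally have q: "qf I ?M X = of_real (\<Sum>k\<in>I. Re (D k) * (cmod (y k))\<^sup>2)" .
    have "\<exists>k\<in>I. y k \<noteq> 0"
    proof (rule ccontr)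
      assume "\<not> (\<exists>k\<in>I. y k \<noteq> 0)"
      then have y0: "y = (\<lambda>_. 0)" by (auto simp: fun_eq_iff y_def gmv_def)
      have "X = gmv I (gmm I U (gadj U)) X" using U X(1) gmv_gid[OF fin X(1)] by (simp add: gunit_def)
      also have "\<dots> = gmv I U y" unfolding y_def gmv_gmm[OF fin] ..
      also have "\<dots> = (\<lambda>_. 0)" unfolding y0 by (simp add: gmv_def fun_eq_iff)
      finally show False using X(2) by simp
    qed
    then obtain k where k: "k \<in> I" "y k \<noteq> 0" by blast
    have nn: "\<And>i. i \<in> I \<Longrightarrow> 0 \<le> Re (D i) * (cmod (y i))\<^sup>2" using Dp by (simp add: less_imp_le)
    have "Re (D k) * (cmod (y k))\<^sup>2 > 0" using Dp[OF k(1)] k(2) by simp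
    then have "(\<Sum>k\<in>I. Re (D k) * (cmod (y k))\<^sup>2) > 0"
      using k nn fin by (intro sum_pos2[of _ k]) auto
    then show ?thesis unfolding q by simp
  qed
  ultimately show ?thesis unfolding ghpd_def by (simp add: Uwf)
qed

lemma hpd_decomp:
  assumes fin: "finite I" and N: "ghpd I N"
  shows "\<exists>U D. gunit I U \<and> N = gmm I U (gmm I (gdiag I D) (gadj U)) \<and> (\<forall>k\<in>I. D k \<in> \<real> \<and> Re (D k) > 0)"
proof -
  obtain U D where "gunit I U" "N = gmm I U (gmm I (gdiag I D) (gadj U))"
    using spectral[OF fin, of N] N unfolding ghpd_def gunit_def by blast
  moreover then have "\<forall>k\<in>I. D k \<in> \<real> \<and> Re (D k) > 0" using hpd_diag_pos[OF fin N] by blast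
  ultimately show ?thesis by blast
qed

lemma hpd_sqrt_ex:
  assumes fin: "finite I" and N: "ghpd I N"
  shows "\<exists>S. ghpd I S \<and> gmm I S S = N"
proof -
  obtain U D where U: "gunit I U" and Nd: "N = gmm I U (gmm I (gdiag I D) (gadj U))"
    and D: "\<forall>k\<in>I. D k \<in> \<real> \<and> Re (D k) > 0"
    using hpd_decomp[OF fin N] by blast
  define E where "E = (\<lambda>k. complex_of_real (sqrt (Re (D k))))"
  define S where "S = gmm I U (gmm I (gdiag I E) (gadj U))"
  have "ghpd I S" unfolding S_def using D by (intro diag_pos_hpd[OF fin U]) (auto simp: E_def)
  moreover have "gmm I S S = N"
  proof -
    have "gmm I S S = gmm I U (gmm I (gdiag I (\<lambda>k. E k * E k)) (gadj U))"
      unfolding S_def udu_mult[OF fin U gwf_gdiag gwf_gdiag] gdiag_mult[OF fin] ..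
    also have "gdiag I (\<lambda>k. E k * E k) = gdiag I D"
    proof (rule gdiag_cong)
      fix k assume k: "k \<in> I"
      have Dk: "Re (D k) > 0" "D k \<in> \<real>" using D k by auto
      have "E k * E k = of_real (Re (D k))" unfolding E_def using Dk
        by (simp flip: of_real_mult)
      also have "\<dots> = D k" using Dk by (simp add: complex_is_Real_iff)
      finally show "E k * E k = D k" .
    qed
    finally show ?thesis using Nd by simp
  qed
  ultimately show ?thesis by blast
qed

lemma hpd_inv_ex:
  assumes fin: "finite I" and N: "ghpd I N"
  shows "\<exists>Ni. gwf I Ni \<and> gmm I N Ni = gid I \<and> gmm I Ni N = gid I"
proof -
  obtain U D where U: "gunit I U" and Nd: "N = gmm I U (gmm I (gdiag I D) (gadj U))"
    and D: "\<forall>k\<in>I. D k \<in> \<real> \<and> Re (D k) > 0"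
    using hpd_decomp[OF fin N] by blast
  have Dnz: "D k \<noteq> 0" if "k \<in> I" for k using D that by auto
  define Ni where "Ni = gmm I U (gmm I (gdiag I (\<lambda>k. 1 / D k)) (gadj U))"
  have one: "gmm I U (gmm I (gdiag I (\<lambda>_. 1)) (gadj U)) = gid I"
    using U unfolding gdiag_one by (simp add: gunit_def gmm_gid_left[OF fin] gwf_gadj)
  have "gmm I N Ni = gid I"
  proof -
    have "gmm I N Ni = gmm I U (gmm I (gdiag I (\<lambda>k. D k * (1 / D k))) (gadj U))"
      unfolding Nd Ni_def udu_mult[OF fin U gwf_gdiag gwf_gdiag] gdiag_mult[OF fin] ..
    also have "gdiag I (\<lambda>k. D k * (1 / D k)) = gdiag I (\<lambda>_. 1)" using Dnz by (intro gdiag_cong) simp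
    finally show ?thesis using one by simp
  qed
  moreover have "gmm I Ni N = gid I"
  proof -
    have "gmm I Ni N = gmm I U (gmm I (gdiag I (\<lambda>k. (1 / D k) * D k)) (gadj U))"
      unfolding Nd Ni_def udu_mult[OF fin U gwf_gdiag gwf_gdiag] gdiag_mult[OF fin] ..
    also have "gdiag I (\<lambda>k. (1 / D k) * D k) = gdiag I (\<lambda>_. 1)" using Dnz by (intro gdiag_cong) simp
    finally show ?thesis using one by simp
  qed
  ultimately show ?thesis unfolding Ni_def by (intro exI[of _ Ni]) (simp add: Ni_def)
qed

lemma inv_unique:
  assumes fin: "finite I" and B1: "gwf I B1" and B2: "gwf I B2"
    and h1: "gmm I B1 A = gid I" and h2: "gmm I A B2 = gid I"
  shows "B1 = B2"
proof -
  have "B1 = gmm I B1 (gmm I A B2)" using h2 gmm_gid_right[OF fin B1] by simp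
  also have "\<dots> = gmm I (gmm I B1 A) B2" by (simp add: gmm_assoc[OF fin])
  also have "\<dots> = B2" using h1 gmm_gid_left[OF fin B2] by simp
  finally show ?thesis .
qed

lemma sqrt_unique:
  assumes fin: "finite I" and S: "ghpd I S" and T: "ghpd I T" and ST: "gmm I S S = gmm I T T"
  shows "S = T"
proof -
  define H where "H = msub S T"
  have Hwf: "gwf I H" using S T unfolding H_def ghpd_def by (simp add: gwf_msub)
  have Hadj: "gadj H = H" using S T unfolding H_def ghpd_def by (simp add: gadj_msub)
  obtain U D where U: "gunit I U" and Hd: "H = gmm I U (gmm I (gdiag I D) (gadj U))"
    using spectral[OF fin Hwf Hadj] unfolding gunit_def by blast
  have Uwf: "gwf I U" and UU: "gmm I U (gadj U) = gid I" using U by (auto simp: gunit_def)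
  define E where "E = gmm I (gadj U) (gmm I S U)"
  define F where "F = gmm I (gadj U) (gmm I T U)"
  have EF: "msub E F = gdiag I D"
    unfolding E_def F_def gmm_msub_left[symmetric] gmm_msub_right[symmetric] H_def[symmetric]
    by (rule decomp_diag[OF fin U Hd])
  have sq: "gmm I (gmm I (gadj U) (gmm I X U)) (gmm I (gadj U) (gmm I X U)) = gmm I (gadj U) (gmm I (gmm I X X) U)"
    for X
  proof -
    have "gmm I U (gmm I (gadj U) (gmm I X U)) = gmm I X U" by (rule gmm_cancel[OF fin UU gwf_gmm])
    then show ?thesis by (simp add: gmm_assoc[OF fin])
  qed
  have EE: "gmm I E E = gmm I F F" unfolding E_def F_def sq ST ..
  have Dz: "D k = 0" if k: "k \<in> I" for k
  proof -
    have "gmm I E (msub E F) k k + gmm I (msub E F) F k k = gmm I E E k k - gmm I F F k k"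
      unfolding gmm_msub_left gmm_msub_right by (simp add: msub_def)
    then have "E k k * D k + D k * F k k = 0"
      unfolding EF gdiag_right_entry[OF fin k] gdiag_left_entry[OF fin k] EE by simp
    then have z: "D k * (E k k + F k k) = 0" by (simp add: algebra_simps)
    have uw: "gwfv I (\<lambda>i. U i k)" using Uwf k by (rule col_wf)
    have "Re (E k k) > 0" using S uw col_nz[OF U k] unfolding E_def qf_col[OF fin k, symmetric] ghpd_def by blast
    moreover have "Re (F k k) > 0" using T uw col_nz[OF U k] unfolding F_def qf_col[OF fin k, symmetric] ghpd_def by blast
    ultimately have "E k k + F k k \<noteq> 0" by (metis less_add_same_cancel1 order_less_asym' plus_complex.sel(1) zero_complex.sel(1))
    then show ?thesis using z by simp
  qed
  have "gdiag I D = (\<lambda>_ _. 0)" using Dz by (auto simp: gdiag_def fun_eq_iff)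
  then have "H = (\<lambda>_ _. 0)" unfolding Hd by (simp add: gmm_def fun_eq_iff)
  then show ?thesis unfolding H_def msub_def by (auto simp: fun_eq_iff)
qed

lemma tinv_eq:
  assumes "gwf (idx d) B" "gmm (idx d) A B = gid (idx d)" "gmm (idx d) B A = gid (idx d)"
  shows "tinv d A = B"
  unfolding tinv_def bridge
proof (rule the_equality)
  show "gwf (idx d) B \<and> gmm (idx d) A B = gid (idx d) \<and> gmm (idx d) B A = gid (idx d)" using assms by simp
  fix C assume "gwf (idx d) C \<and> gmm (idx d) A C = gid (idx d) \<and> gmm (idx d) C A = gid (idx d)"
  then show "C = B" using inv_unique[OF finite_idx] assms by metis
qed

lemma tsqrt_prop:
  assumes "ghpd (idx d) N"
  shows "ghpd (idx d) (tsqrt d N) \<and> gmm (idx d) (tsqrt d N) (tsqrt d N) = N"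
  unfolding tsqrt_def bridge hpd_bridge
proof (rule theI'[of "\<lambda>S. ghpd (idx d) S \<and> gmm (idx d) S S = N"])
  show "\<exists>!S. ghpd (idx d) S \<and> gmm (idx d) S S = N"
    using hpd_sqrt_ex[OF finite_idx assms] sqrt_unique[OF finite_idx] by metis
qed

definition mpc :: "'a set \<Rightarrow> ('a \<Rightarrow> 'a \<Rightarrow> complex) \<Rightarrow> ('a \<Rightarrow> 'a \<Rightarrow> complex) \<Rightarrow> bool" where
  "mpc I A X \<longleftrightarrow> gwf I X \<and> gmm I (gmm I A X) A = A \<and> gmm I (gmm I X A) X = X \<and>
     gadj (gmm I A X) = gmm I A X \<and> gadj (gmm I X A) = gmm I X A"

lemma mp_unique:
  assumes fin: "finite I" and X: "mpc I A X" and Y: "mpc I A Y"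
  shows "X = Y"
proof -
  note as = gmm_assoc[OF fin]
  have X1: "gmm I (gmm I A X) A = A" "gmm I (gmm I X A) X = X" "gadj (gmm I A X) = gmm I A X"
    "gadj (gmm I X A) = gmm I X A" using X by (auto simp: mpc_def)
  have Y1: "gmm I (gmm I A Y) A = A" "gmm I (gmm I Y A) Y = Y" "gadj (gmm I A Y) = gmm I A Y"
    "gadj (gmm I Y A) = gmm I Y A" using Y by (auto simp: mpc_def)
  have e1: "X = gmm I X (gmm I (gadj X) (gadj A))"
  proof -
    have "X = gmm I X (gmm I A X)" using X1(2) by (simp add: as)
    also have "gmm I A X = gmm I (gadj X) (gadj A)" using X1(3) by (simp add: gadj_gmm)
    finally show ?thesis .
  qed
  have e2: "gadj A = gmm I (gadj A) (gmm I A Y)"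
  proof -
    have "gadj A = gadj (gmm I (gmm I A Y) A)" using Y1(1) by simp
    also have "\<dots> = gmm I (gadj A) (gadj (gmm I A Y))" by (simp add: gadj_gmm)
    finally show ?thesis using Y1(3) by simp
  qed
  have e3: "Y = gmm I (gmm I (gadj A) (gadj Y)) Y"
  proof -
    have "Y = gmm I (gmm I Y A) Y" using Y1(2) by simp
    also have "gmm I Y A = gmm I (gadj A) (gadj Y)" using Y1(4) by (simp add: gadj_gmm)
    finally show ?thesis .
  qed
  have e4: "gadj A = gmm I (gmm I X A) (gadj A)"
  proof -
    have "gadj A = gadj (gmm I A (gmm I X A))" using X1(1) by (simp add: as)
    also have "\<dots> = gmm I (gadj (gmm I X A)) (gadj A)" by (simp add: gadj_gmm)
    finally show ?thesis using X1(4) by simp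
  qed
  have "X = gmm I X (gmm I (gadj X) (gmm I (gadj A) (gmm I A Y)))"
    using e1 e2 by metis
  also have "\<dots> = gmm I (gmm I X (gmm I (gadj X) (gadj A))) (gmm I A Y)" by (simp add: as)
  also have "\<dots> = gmm I X (gmm I A Y)" using e1[symmetric] by simp
  finally have x: "X = gmm I X (gmm I A Y)" .
  have "Y = gmm I (gmm I (gmm I (gmm I X A) (gadj A)) (gadj Y)) Y"
    using e3 e4 by metis
  also have "\<dots> = gmm I (gmm I X A) (gmm I (gmm I (gadj A) (gadj Y)) Y)" by (simp add: as)
  also have "\<dots> = gmm I (gmm I X A) Y" using e3[symmetric] by simp
  finally have y: "Y = gmm I (gmm I X A) Y" .
  show ?thesis using x y by (simp add: as)
qed

lemma gram_zero:
  assumes fin: "finite I" and M: "gwf I M" and z: "gmm I (gadj M) M = (\<lambda>_ _. 0)"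
  shows "M = (\<lambda>_ _. 0)"
proof (intro ext)
  fix i k
  show "M i k = 0"
  proof (cases "i \<in> I \<and> k \<in> I")
    case True
    have "gmm I (gadj M) M k k = (\<Sum>j\<in>I. cnj (M j k) * M j k)" using True by (simp add: gmm_def gadj_def)
    also have "\<dots> = of_real (\<Sum>j\<in>I. (cmod (M j k))\<^sup>2)" unfolding of_real_sum
      by (intro sum.cong refl) (metis complex_norm_square mult.commute of_real_power)
    finally have "(\<Sum>j\<in>I. (cmod (M j k))\<^sup>2) = 0" using z by (metis of_real_eq_0_iff)
    then have "\<forall>j\<in>I. (cmod (M j k))\<^sup>2 = 0" using fin by (subst (asm) sum_nonneg_eq_0_iff) auto
    then show ?thesis using True by auto
  qed (use M in \<open>auto simp: gwf_def\<close>)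
qed

lemma udu_mult2:
  assumes fin: "finite I" and U: "gunit I U"
  shows "gmm I (gmm I U (gmm I (gdiag I A) (gadj U))) (gmm I U (gmm I (gdiag I B) (gadj U)))
       = gmm I U (gmm I (gdiag I (\<lambda>k. A k * B k)) (gadj U))"
  unfolding udu_mult[OF fin U gwf_gdiag gwf_gdiag] gdiag_mult[OF fin] ..

lemma udu_adj: assumes fin: "finite I" shows
  "gadj (gmm I U (gmm I (gdiag I A) (gadj U))) = gmm I U (gmm I (gdiag I (\<lambda>k. cnj (A k))) (gadj U))"
  by (simp add: gadj_gmm gadj_gdiag gmm_assoc[OF fin])

lemma mp_exists:
  assumes fin: "finite I" and A: "gwf I A"
  shows "\<exists>X. mpc I A X"
proof -
  note as = gmm_assoc[OF fin]
  define B where "B = gmm I (gadj A) A"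
  have Bwf: "gwf I B" by (simp add: B_def)
  have Badj: "gadj B = B" by (simp add: B_def gadj_gmm)
  obtain U D where U: "gunit I U" and Bd: "B = gmm I U (gmm I (gdiag I D) (gadj U))"
    using spectral[OF fin Bwf Badj] unfolding gunit_def by blast
  have Dr: "cnj (D k) = D k" if "k \<in> I" for k using herm_diag_real[OF fin Badj U Bd that] .
  define ud where "ud = (\<lambda>E. gmm I U (gmm I (gdiag I E) (gadj U)))"
  have udm: "gmm I (ud E1) (ud E2) = ud (\<lambda>k. E1 k * E2 k)" for E1 E2
    unfolding ud_def by (rule udu_mult2[OF fin U])
  have udc: "ud E1 = ud E2" if "\<And>k. k \<in> I \<Longrightarrow> E1 k = E2 k" for E1 E2
    unfolding ud_def using gdiag_cong[of I E1 E2, OF that] by simp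
  have uda: "gadj (ud E) = ud (\<lambda>k. cnj (E k))" for E unfolding ud_def by (rule udu_adj[OF fin])
  define Dp where "Dp = (\<lambda>k. if D k = 0 then 0 else 1 / D k)"
  define Bp where "Bp = ud Dp"
  have B: "B = ud D" unfolding Bd ud_def ..
  have Bpadj: "gadj Bp = Bp" unfolding Bp_def uda using Dr by (intro udc) (simp add: Dp_def)
  define P where "P = ud (\<lambda>k. D k * Dp k)"
  have P1: "gmm I B Bp = P" unfolding B Bp_def P_def udm ..
  have P2: "gmm I Bp B = P" unfolding B Bp_def P_def udm by (intro udc) simp
  have Padj: "gadj P = P" unfolding P_def uda using Dr by (intro udc) (simp add: Dp_def)
  have BPB: "gmm I P B = B" unfolding B P_def udm by (intro udc) (simp add: Dp_def)
  have BBP: "gmm I B P = B" unfolding B P_def udm by (intro udc) (simp add: Dp_def)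
  have PBp: "gmm I P Bp = Bp" unfolding Bp_def P_def udm by (intro udc) (simp add: Dp_def)
  define X where "X = gmm I Bp (gadj A)"
  have XA: "gmm I X A = P" unfolding X_def as B_def[symmetric] P2 ..
  have "mpc I A X"
    unfolding mpc_def
  proof (intro conjI)
    show "gwf I X" by (simp add: X_def)
    show "gadj (gmm I X A) = gmm I X A" unfolding XA Padj ..
    show "gadj (gmm I A X) = gmm I A X" unfolding X_def by (simp add: gadj_gmm Bpadj as)
    show "gmm I (gmm I X A) X = X" unfolding XA unfolding X_def as[symmetric] PBp ..
    show "gmm I (gmm I A X) A = A"
    proof -
      have AXA: "gmm I (gmm I A X) A = gmm I A P" unfolding as XA ..
      define M where "M = msub A (gmm I A P)"
      have Mwf: "gwf I M" unfolding M_def using A by (simp add: gwf_msub)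
      have "gmm I (gadj M) M = msub (msub B (gmm I P B)) (msub (gmm I B P) (gmm I P (gmm I B P)))"
        unfolding M_def gadj_msub gmm_msub_left gmm_msub_right gadj_gmm Padj B_def as ..
      also have "\<dots> = (\<lambda>_ _. 0)" unfolding BBP BPB by (simp add: msub_def)
      finally have "M = (\<lambda>_ _. 0)" by (rule gram_zero[OF fin Mwf])
      then show ?thesis unfolding AXA M_def msub_def by (auto simp: fun_eq_iff)
    qed
  qed
  then show ?thesis by blast
qed

definition gspec :: "'a set \<Rightarrow> ('a \<Rightarrow> 'a \<Rightarrow> complex) \<Rightarrow> complex set" where
  "gspec I A = {c. \<exists>X. gwfv I X \<and> X \<noteq> (\<lambda>_. 0) \<and> gmv I A X = (\<lambda>i. c * X i)}"

lemma spec_bridge: "tspec d A = gspec (idx d) A"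
  unfolding tspec_def gspec_def bridge ..

lemma gmv_zero: "gmv I A (\<lambda>_. 0) = (\<lambda>_. 0)" by (simp add: gmv_def fun_eq_iff)

lemma spec_sub:
  assumes fin: "finite I" and QP: "gmm I Q P = gid I"
  shows "gspec I B \<subseteq> gspec I (gmm I (gmm I P B) Q)"
proof
  fix c assume "c \<in> gspec I B"
  then obtain X where X: "gwfv I X" "X \<noteq> (\<lambda>_. 0)" "gmv I B X = (\<lambda>i. c * X i)" by (auto simp: gspec_def)
  define Y where "Y = gmv I P X"
  have "gmv I Q Y = X" unfolding Y_def gmv_gmm[OF fin, symmetric] QP using gmv_gid[OF fin X(1)] .
  then have "Y \<noteq> (\<lambda>_. 0)" using X(2) gmv_zero by metis
  moreover have "gmv I (gmm I (gmm I P B) Q) Y = (\<lambda>i. c * Y i)"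
  proof -
    have "gmv I (gmm I (gmm I P B) Q) Y = gmv I P (gmv I B (gmv I (gmm I Q P) X))"
      unfolding Y_def by (simp add: gmv_gmm[OF fin])
    also have "\<dots> = (\<lambda>i. c * Y i)" unfolding QP gmv_gid[OF fin X(1)] X(3) gmv_scale Y_def ..
    finally show ?thesis .
  qed
  moreover have "gwfv I Y" by (simp add: Y_def)
  ultimately show "c \<in> gspec I (gmm I (gmm I P B) Q)" by (auto simp: gspec_def)
qed

lemma spec_sim:
  assumes fin: "finite I" and P: "gwf I P" and Q: "gwf I Q" and QP: "gmm I Q P = gid I" and PQ: "gmm I P Q = gid I"
    and B: "gwf I B"
  shows "gspec I (gmm I (gmm I P B) Q) = gspec I B"
proof
  show "gspec I B \<subseteq> gspec I (gmm I (gmm I P B) Q)" by (rule spec_sub[OF fin QP])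
  have "gmm I (gmm I Q (gmm I (gmm I P B) Q)) P = B"
  proof -
    have "gmm I (gmm I Q (gmm I (gmm I P B) Q)) P = gmm I (gmm I Q P) (gmm I B (gmm I Q P))"
      by (simp add: gmm_assoc[OF fin])
    also have "\<dots> = B" unfolding QP gmm_gid_left[OF fin B] gmm_gid_right[OF fin B] gmm_gid_left[OF fin gwf_gid] ..
    finally show ?thesis .
  qed
  then show "gspec I (gmm I (gmm I P B) Q) \<subseteq> gspec I B" using spec_sub[OF fin PQ, of "gmm I (gmm I P B) Q"] by simp
qed

lemma mpc_sym: "gwf I T \<Longrightarrow> mpc I T Y \<Longrightarrow> mpc I Y T"
  by (simp add: mpc_def)

lemma assoc_ext: "finite I \<Longrightarrow> gmm I A B = C \<Longrightarrow> gmm I A (gmm I B Z) = gmm I C Z"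
  using gmm_assoc[of I A B Z] by simp

lemma assoc_ext3: "finite I \<Longrightarrow> gmm I A (gmm I B C) = D \<Longrightarrow> gmm I A (gmm I B (gmm I C Z)) = gmm I D Z"
  using gmm_assoc[of I A "gmm I B C" Z] gmm_assoc[of I B C Z] by simp

lemma normal_mp_commute:
  assumes fin: "finite I" and T: "gwf I T" and Y: "mpc I T Y"
    and nor: "gmm I (gadj T) T = gmm I T (gadj T)"
  shows "gmm I T Y = gmm I Y T"
proof -
  note as = gmm_assoc[OF fin]
  have Ywf: "gwf I Y" using Y by (simp add: mpc_def)
  have h1: "gmm I T (gmm I Y T) = T" using Y by (simp add: mpc_def as)
  have h2: "gmm I Y (gmm I T Y) = Y" using Y by (simp add: mpc_def as)
  have h3: "gmm I (gadj Y) (gadj T) = gmm I T Y" using Y by (simp add: mpc_def gadj_gmm)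
  have h4: "gmm I (gadj T) (gadj Y) = gmm I Y T" using Y by (simp add: mpc_def gadj_gmm)
  have h5: "gmm I (gadj T) (gmm I (gadj Y) (gadj T)) = gadj T"
    using arg_cong[OF h1, of gadj] by (simp add: gadj_gmm as)
  have h6: "gmm I (gadj Y) (gmm I (gadj T) (gadj Y)) = gadj Y"
    using arg_cong[OF h2, of gadj] by (simp add: gadj_gmm as)
  note e1 = assoc_ext3[OF fin h1] and e2 = assoc_ext3[OF fin h2] and e3 = assoc_ext[OF fin h3]
    and e4 = assoc_ext[OF fin h4] and e5 = assoc_ext3[OF fin h5] and e6 = assoc_ext3[OF fin h6]
  note hs = h1 h2 h3 h4 h5 h6 e1 e2 e3 e4 e5 e6
  define B1 where "B1 = gmm I (gadj T) T"
  define Z1 where "Z1 = gmm I Y (gadj Y)"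
  define Z2 where "Z2 = gmm I (gadj Y) Y"
  have BZ1: "gmm I B1 Z1 = gmm I Y T"
  proof -
    have "gmm I B1 Z1 = gmm I (gadj T) (gmm I (gmm I T Y) (gadj Y))" by (simp add: B1_def Z1_def as)
    also have "gmm I T Y = gmm I (gadj Y) (gadj T)" using h3 by simp
    also have "gmm I (gadj T) (gmm I (gmm I (gadj Y) (gadj T)) (gadj Y)) = gmm I Y T" by (simp only: as e5) (rule h4)
    finally show ?thesis .
  qed
  have ZB1: "gmm I Z1 B1 = gmm I Y T" unfolding B1_def Z1_def by (simp add: as hs)
  have BZ2: "gmm I B1 Z2 = gmm I T Y" unfolding B1_def nor Z2_def by (simp add: as hs)
  have ZB2: "gmm I Z2 B1 = gmm I T Y"
  proof -
    have "gmm I Z2 B1 = gmm I (gadj Y) (gmm I (gmm I Y T) (gadj T))" by (simp add: B1_def nor Z2_def as)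
    also have "gmm I Y T = gmm I (gadj T) (gadj Y)" using h4 by simp
    also have "gmm I (gadj Y) (gmm I (gmm I (gadj T) (gadj Y)) (gadj T)) = gmm I T Y" by (simp only: as e6) (rule h3)
    finally show ?thesis .
  qed
  have YTadj: "gadj (gmm I Y T) = gmm I Y T" and TYadj: "gadj (gmm I T Y) = gmm I T Y"
    using Y by (auto simp: mpc_def)
  have m1: "mpc I B1 Z1" unfolding mpc_def
  proof (intro conjI)
    show "gwf I Z1" by (simp add: Z1_def)
    have "gmm I (gmm I B1 Z1) B1 = gmm I (gmm I Y T) (gmm I (gadj T) T)" unfolding BZ1 unfolding B1_def ..
    also have "gmm I Y T = gmm I (gadj T) (gadj Y)" using h4 by simp
    also have "gmm I (gmm I (gadj T) (gadj Y)) (gmm I (gadj T) T) = gmm I (gadj T) T" by (simp only: as e5)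
    finally show "gmm I (gmm I B1 Z1) B1 = B1" unfolding B1_def .
    show "gmm I (gmm I Z1 B1) Z1 = Z1" unfolding ZB1 unfolding Z1_def by (simp add: as hs)
  qed (simp_all add: BZ1 ZB1 YTadj)
  have m2: "mpc I B1 Z2" unfolding mpc_def
  proof (intro conjI)
    show "gwf I Z2" by (simp add: Z2_def)
    show "gmm I (gmm I B1 Z2) B1 = B1" unfolding BZ2 unfolding B1_def nor by (simp add: as hs)
    have "gmm I (gmm I Z2 B1) Z2 = gmm I (gmm I T Y) (gmm I (gadj Y) Y)" unfolding ZB2 unfolding Z2_def ..
    also have "gmm I T Y = gmm I (gadj Y) (gadj T)" using h3 by simp
    also have "gmm I (gmm I (gadj Y) (gadj T)) (gmm I (gadj Y) Y) = gmm I (gadj Y) Y" by (simp only: as e6)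
    finally show "gmm I (gmm I Z2 B1) Z2 = Z2" unfolding Z2_def .
  qed (simp_all add: BZ2 ZB2 TYadj)
  have "Z1 = Z2" by (rule mp_unique[OF fin m1 m2])
  then show ?thesis using BZ1 BZ2 by simp
qed

lemma eig_inv:
  assumes fin: "finite I" and h: "gmm I (gmm I T Y) T = T" and c: "gmm I T Y = gmm I Y T"
    and l: "l \<noteq> 0" and ev: "gmv I T x = (\<lambda>i. l * x i)"
  shows "gmv I Y x = (\<lambda>i. (1 / l) * x i)"
proof -
  have "gmv I T x = gmv I (gmm I (gmm I Y T) T) x" using h c by simp
  also have "\<dots> = (\<lambda>i. (l * l) * gmv I Y x i)"
    by (simp add: gmv_gmm[OF fin] ev gmv_scale mult.assoc)
  finally have "(\<lambda>i. l * x i) = (\<lambda>i. (l * l) * gmv I Y x i)" using ev by simp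
  then have "\<And>i. l * x i = (l * l) * gmv I Y x i" by metis
  then show ?thesis using l by (auto simp: fun_eq_iff field_simps)
qed

locale simx =
  fixes I :: "'a set" and S Si :: "'a \<Rightarrow> 'a \<Rightarrow> complex"
  assumes fin: "finite I" and Sw: "gwf I S" and Siw: "gwf I Si"
    and SSi: "gmm I S Si = gid I" and SiS: "gmm I Si S = gid I"
    and Sadj: "gadj S = S" and Siadj: "gadj Si = Si"
begin

lemma c1: "gwf I W \<Longrightarrow> gmm I S (gmm I Si W) = W" by (rule gmm_cancel[OF fin SSi])
lemma c2: "gwf I W \<Longrightarrow> gmm I Si (gmm I S W) = W" by (rule gmm_cancel[OF fin SiS])
lemma gl: "gwf I W \<Longrightarrow> gmm I (gid I) W = W" by (rule gmm_gid_left[OF fin])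
lemma gr: "gwf I W \<Longrightarrow> gmm I W (gid I) = W" by (rule gmm_gid_right[OF fin])

lemmas ss = gmm_assoc[OF fin] SSi SiS c1 c2 gl gr Sw Siw Sadj Siadj gadj_gmm gwf_gadj

lemma conj_eq: assumes "gwf I Z" "gwf I W"
  shows "gmm I (gmm I S Z) Si = gmm I (gmm I S W) Si \<longleftrightarrow> Z = W"
proof
  assume h: "gmm I (gmm I S Z) Si = gmm I (gmm I S W) Si"
  have "Z = gmm I Si (gmm I (gmm I (gmm I S Z) Si) S)" using assms by (simp add: ss)
  also have "\<dots> = W" unfolding h using assms by (simp add: ss)
  finally show "Z = W" .
qed simp

lemma conj_mult: assumes "gwf I W"
  shows "gmm I (gmm I (gmm I S Z) Si) (gmm I (gmm I S W) Si) = gmm I (gmm I S (gmm I Z W)) Si"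
  using assms by (simp add: ss)

lemma herm_transfer: assumes Z: "gwf I Z"
  shows "gadj (gmm I (gmm I S Z) Si) = gmm I (gmm I S Z) Si \<longleftrightarrow> gadj (gmm I (gmm I S S) Z) = gmm I (gmm I S S) Z"
proof -
  have l: "gadj (gmm I (gmm I S Z) Si) = gmm I Si (gmm I (gadj Z) S)" by (simp add: ss)
  have r: "gadj (gmm I (gmm I S S) Z) = gmm I (gadj Z) (gmm I S S)" by (simp add: ss)
  show ?thesis unfolding l r
  proof
    assume h: "gmm I Si (gmm I (gadj Z) S) = gmm I (gmm I S Z) Si"
    have "gmm I (gadj Z) (gmm I S S) = gmm I S (gmm I (gmm I Si (gmm I (gadj Z) S)) S)"
      using Z by (simp add: ss)
    also have "\<dots> = gmm I (gmm I S S) Z" unfolding h using Z by (simp add: ss)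
    finally show "gmm I (gadj Z) (gmm I S S) = gmm I (gmm I S S) Z" .
  next
    assume h: "gmm I (gadj Z) (gmm I S S) = gmm I (gmm I S S) Z"
    have "gmm I Si (gmm I (gadj Z) S) = gmm I Si (gmm I (gmm I (gadj Z) (gmm I S S)) Si)"
      using Z by (simp add: ss)
    also have "\<dots> = gmm I (gmm I S Z) Si" unfolding h using Z by (simp add: ss)
    finally show "gmm I Si (gmm I (gadj Z) S) = gmm I (gmm I S Z) Si" .
  qed
qed

lemma weighted_transfer:
  assumes A: "gwf I A" and X: "gwf I X"
  shows "(gmm I (gmm I A X) A = A \<and> gmm I (gmm I X A) X = X \<and>
          gadj (gmm I (gmm I S S) (gmm I A X)) = gmm I (gmm I S S) (gmm I A X) \<and>
          gadj (gmm I (gmm I S S) (gmm I X A)) = gmm I (gmm I S S) (gmm I X A))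
     \<longleftrightarrow> mpc I (gmm I (gmm I S A) Si) (gmm I (gmm I S X) Si)"
proof -
  have m1: "gmm I (gmm I (gmm I S (gmm I A X)) Si) (gmm I (gmm I S A) Si)
      = gmm I (gmm I S (gmm I (gmm I A X) A)) Si" using A X by (simp add: conj_mult)
  have m2: "gmm I (gmm I (gmm I S (gmm I X A)) Si) (gmm I (gmm I S X) Si)
      = gmm I (gmm I S (gmm I (gmm I X A) X)) Si" using A X by (simp add: conj_mult)
  have m3: "gmm I (gmm I (gmm I S A) Si) (gmm I (gmm I S X) Si) = gmm I (gmm I S (gmm I A X)) Si"
    using X by (simp add: conj_mult)
  have m4: "gmm I (gmm I (gmm I S X) Si) (gmm I (gmm I S A) Si) = gmm I (gmm I S (gmm I X A)) Si"
    using A by (simp add: conj_mult)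
  show ?thesis unfolding mpc_def m3 m4 unfolding m1 m2
    using conj_eq[OF gwf_gmm A] conj_eq[OF gwf_gmm X] herm_transfer[OF gwf_gmm] by simp
qed

end

theorem theorem4p7:
  fixes d :: "nat list" and A N :: tensor
  assumes "tens d A"
    and "hpd d N"
  defines "At \<equiv> eprod d (eprod d (tsqrt d N) A) (tinv d (tsqrt d N))"
  shows "(\<forall>l. l \<in> tspec d A \<longleftrightarrow> l \<in> tspec d At)
       \<and> (\<forall>l. l \<in> tspec d (wmp d N N A) \<longleftrightarrow> l \<in> tspec d (mp d At))
       \<and> (eprod d (wct d N A) A = eprod d A (wct d N A) \<longrightarrow>
           (\<forall>l. l \<noteq> 0 \<longrightarrow> (l \<in> tspec d A \<longleftrightarrow> 1 / l \<in> tspec d (wmp d N N A))))"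
proof -
  define I where "I = idx d"
  have fin: "finite I" unfolding I_def by (rule finite_idx)
  note as = gmm_assoc[OF fin]
  have Aw: "gwf I A" using assms(1) unfolding I_def bridge .
  have Nh: "ghpd I N" using assms(2) unfolding I_def hpd_bridge .
  define S where "S = tsqrt d N"
  have S: "ghpd I S" "gmm I S S = N" using tsqrt_prop[of d N] Nh unfolding I_def S_def by auto
  have Sw: "gwf I S" and Sadj: "gadj S = S" using S(1) by (auto simp: ghpd_def)
  obtain Si where Siw: "gwf I Si" and SSi: "gmm I S Si = gid I" and SiS: "gmm I Si S = gid I"
    using hpd_inv_ex[OF fin S(1)] by blast
  have tinvS: "tinv d S = Si" using tinv_eq[of d Si S] Siw SSi SiS unfolding I_def by blast
  have Siadj: "gadj Si = Si"
  proof (rule inv_unique[OF fin gwf_gadj[OF Siw] Siw])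
    show "gmm I (gadj Si) S = gid I" using arg_cong[OF SSi, of gadj] by (simp add: gadj_gmm Sadj)
    show "gmm I S Si = gid I" by (rule SSi)
  qed
  interpret simx I S Si using fin Sw Siw SSi SiS Sadj Siadj by unfold_locales
  define T where "T = gmm I (gmm I S A) Si"
  have AtT: "At = T" unfolding At_def T_def bridge tinvS S_def[symmetric] I_def ..
  have Tw: "gwf I T" by (simp add: T_def)
  obtain Y where Y: "mpc I T Y" using mp_exists[OF fin Tw] by blast
  have Yw: "gwf I Y" using Y by (simp add: mpc_def)
  have gidl: "gmm I (gid I) (gmm I P Q) = gmm I P Q" for P Q by (rule gmm_gid_left[OF fin gwf_gmm])
  have mpT: "mp d At = Y"
    unfolding AtT mp_def wmp_def bridge I_def[symmetric] gidl
  proof (rule the_equality)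
    show "gwf I Y \<and> gmm I (gmm I T Y) T = T \<and> gmm I (gmm I Y T) Y = Y \<and>
        gadj (gmm I T Y) = gmm I T Y \<and> gadj (gmm I Y T) = gmm I Y T" using Y by (simp add: mpc_def)
    fix X assume "gwf I X \<and> gmm I (gmm I T X) T = T \<and> gmm I (gmm I X T) X = X \<and>
        gadj (gmm I T X) = gmm I T X \<and> gadj (gmm I X T) = gmm I X T"
    then have "mpc I T X" by (simp add: mpc_def)
    then show "X = Y" using mp_unique[OF fin _ Y] by blast
  qed
  define X0 where "X0 = gmm I (gmm I Si Y) S"
  have X0w: "gwf I X0" by (simp add: X0_def)
  have X0Y: "gmm I (gmm I S X0) Si = Y" unfolding X0_def using Yw by (simp add: ss)
  have wmpA: "wmp d N N A = X0"
    unfolding wmp_def bridge I_def[symmetric] S(2)[symmetric]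
  proof (rule the_equality)
    show "gwf I X0 \<and> gmm I (gmm I A X0) A = A \<and> gmm I (gmm I X0 A) X0 = X0 \<and>
        gadj (gmm I (gmm I S S) (gmm I A X0)) = gmm I (gmm I S S) (gmm I A X0) \<and>
        gadj (gmm I (gmm I S S) (gmm I X0 A)) = gmm I (gmm I S S) (gmm I X0 A)"
      using weighted_transfer[OF Aw X0w] Y X0w unfolding X0Y T_def by simp
    fix X assume h: "gwf I X \<and> gmm I (gmm I A X) A = A \<and> gmm I (gmm I X A) X = X \<and>
        gadj (gmm I (gmm I S S) (gmm I A X)) = gmm I (gmm I S S) (gmm I A X) \<and>
        gadj (gmm I (gmm I S S) (gmm I X A)) = gmm I (gmm I S S) (gmm I X A)"
    then have "mpc I T (gmm I (gmm I S X) Si)" using weighted_transfer[OF Aw] unfolding T_def by blast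
    then have "gmm I (gmm I S X) Si = gmm I (gmm I S X0) Si" unfolding X0Y using mp_unique[OF fin _ Y] by blast
    then show "X = X0" using conj_eq h X0w by blast
  qed
  have spA: "gspec I T = gspec I A" unfolding T_def by (rule spec_sim[OF fin Sw Siw SiS SSi Aw])
  have spW: "gspec I X0 = gspec I Y" unfolding X0_def by (rule spec_sim[OF fin Siw Sw SSi SiS Yw])
  have part1: "\<forall>l. l \<in> tspec d A \<longleftrightarrow> l \<in> tspec d At"
    unfolding spec_bridge I_def[symmetric] AtT spA by simp
  have part2: "\<forall>l. l \<in> tspec d (wmp d N N A) \<longleftrightarrow> l \<in> tspec d (mp d At)"
    unfolding spec_bridge I_def[symmetric] wmpA mpT spW by simp
  have part3: "(\<forall>l. l \<noteq> 0 \<longrightarrow> (l \<in> tspec d A \<longleftrightarrow> 1 / l \<in> tspec d (wmp d N N A)))"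
    if wn: "eprod d (wct d N A) A = eprod d A (wct d N A)"
  proof -
    have tinvN: "tinv d N = gmm I Si Si"
    proof (rule tinv_eq[of d, folded I_def])
      show "gwf I (gmm I Si Si)" by simp
      show "gmm I N (gmm I Si Si) = gid I" unfolding S(2)[symmetric] using Sw Siw by (simp add: ss)
      show "gmm I (gmm I Si Si) N = gid I" unfolding S(2)[symmetric] using Sw Siw by (simp add: ss)
    qed
    define Ah where "Ah = gmm I (gmm I Si Si) (gmm I (gadj A) N)"
    have wn': "gmm I Ah A = gmm I A Ah" using wn unfolding wct_def bridge I_def[symmetric] tinvN Ah_def .
    have n1: "gmm I (gadj T) T = gmm I (gmm I S (gmm I Ah A)) Si"
      unfolding T_def Ah_def S(2)[symmetric] using Aw by (simp add: ss)
    have n2: "gmm I T (gadj T) = gmm I (gmm I S (gmm I A Ah)) Si"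
      unfolding T_def Ah_def S(2)[symmetric] using Aw by (simp add: ss)
    have nor: "gmm I (gadj T) T = gmm I T (gadj T)" unfolding n1 n2 wn' ..
    have com: "gmm I T Y = gmm I Y T" by (rule normal_mp_commute[OF fin Tw Y nor])
    have TYT: "gmm I (gmm I T Y) T = T" using Y by (simp add: mpc_def)
    have YTY: "gmm I (gmm I Y T) Y = Y" using Y by (simp add: mpc_def)
    show ?thesis
    proof (intro allI impI)
      fix l :: complex assume l: "l \<noteq> 0"
      have "l \<in> gspec I T \<longleftrightarrow> 1 / l \<in> gspec I Y"
      proof
        assume "l \<in> gspec I T"
        then obtain x where x: "gwfv I x" "x \<noteq> (\<lambda>_. 0)" "gmv I T x = (\<lambda>i. l * x i)" by (auto simp: gspec_def)
        have "gmv I Y x = (\<lambda>i. (1 / l) * x i)" by (rule eig_inv[OF fin TYT com l x(3)])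
        then show "1 / l \<in> gspec I Y" using x by (auto simp: gspec_def)
      next
        assume "1 / l \<in> gspec I Y"
        then obtain x where x: "gwfv I x" "x \<noteq> (\<lambda>_. 0)" "gmv I Y x = (\<lambda>i. (1 / l) * x i)" by (auto simp: gspec_def)
        have "gmv I T x = (\<lambda>i. (1 / (1 / l)) * x i)"
          by (rule eig_inv[OF fin YTY com[symmetric] _ x(3)]) (use l in simp)
        then show "l \<in> gspec I T" using x by (auto simp: gspec_def)
      qed
      then show "l \<in> tspec d A \<longleftrightarrow> 1 / l \<in> tspec d (wmp d N N A)"
        unfolding spec_bridge I_def[symmetric] wmpA spW spA[symmetric] .
    qed
  qed
  show ?thesis using part1 part2 part3 by blast
qed

end
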